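(* Let $G(x,y;\xi)$, $g(x,y)=\mathbb{E}_{\xi\sim\mathcal{P}}G(x,y;\xi)$ be such that there is $\bar l>0$ with, for every $\xi$ and all $x_1,x_2,y_1,y_2$, $\|\nabla_xG(x_1,y_1;\xi)-\nabla_xG(x_2,y_2;\xi)\|\leq\bar l[\|x_1-x_2\|+\|y_1-y_2\|]$ and $\|\nabla_yG(x_1,y_1;\xi)-\nabla_yG(x_2,y_2;\xi)\|\leq\bar l[\|x_1-x_2\|+\|y_1-y_2\|]$. Let $(x_t,y_t,m_t,n_t)$ be generated by the ZO-VRAGDA algorithm described in the context with step sizes $\alpha,\beta>0$. Then for every $t\geq0$, $$\begin{aligned}\mathbb{E}g(x_{t+1},y_{t+1})\geq{}&\mathbb{E}g(x_t,y_t)+\frac\beta2\mathbb{E}\|\nabla_yg(x_{t+1},y_t)\|^2-\frac\alpha2\mathbb{E}\|\nabla_xg(x_t,y_t)\|^2-\frac\beta2\mathbb{E}\|\nabla_yg(x_{t+1},y_t)-n_t\|^2\\&+\frac\alpha2\mathbb{E}\|\nabla_xg(x_t,y_t)-m_t\|^2+\frac\beta2(1-\bar l\beta)\mathbb{E}\|n_t\|^2-\frac\alpha2(1+\alpha\bar l)\mathbb{E}\|m_t\|^2.\end{aligned}$$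
   Context: Zeroth-order estimators: for a sample $\xi$ and a direction $u$ uniform on the unit sphere of $\mathbb{R}^{d_1}$, $\hat\nabla_xG(x,y;\xi)=\frac{G(x+\mu_1u,y;\xi)-G(x,y;\xi)}{\mu_1/d_1}u$; for $\zeta$ and $v$ uniform on the unit sphere of $\mathbb{R}^{d_2}$, $\hat\nabla_yG(x,y;\zeta)=\frac{G(x,y+\mu_2v;\zeta)-G(x,y;\zeta)}{\mu_2/d_2}v$; for a sample set $\mathcal{B}$ of size $r$ (each sample with its own independent direction) $\hat\nabla G(x,y;\mathcal{B})$ is the average of the single-sample estimators. ZO-VRAGDA with parameters $q,B,b\in\mathbb{N}$, $\alpha,\beta,\mu_1,\mu_2>0$, initial $(x_0,y_0)$: for $t=0,1,\dots$: if $t\bmod q=0$, draw $B$ fresh i.i.d. samples $\mathcal{B}_t$ from $\mathcal{P}$ and set $m_t=\hat\nabla_xG(x_t,y_t;\mathcal{B}_t)$; otherwise draw $b$ fresh samples $\mathcal{I}_t$ and set $m_t=\hat\nabla_xG(x_t,y_t;\mathcal{I}_t)-\hat\nabla_xG(x_{t-1},y_{t-1};\mathcal{I}_t)+m_{t-1}$ (same samples and directions in both terms). Set $x_{t+1}=x_t-\alpha m_t$. Then if $t\bmod q=0$, draw $B$ fresh samples $\bar{\mathcal{B}}_t$ and set $n_t=\hat\nabla_yG(x_{t+1},y_t;\bar{\mathcal{B}}_t)$; otherwise draw $b$ fresh samples $\bar{\mathcal{I}}_t$ and set $n_t=\hat\nabla_yG(x_{t+1},y_t;\bar{\mathcal{I}}_t)-\hat\nabla_yG(x_t,y_{t-1};\bar{\mathcal{I}}_t)+n_{t-1}$.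 Set $y_{t+1}=y_t+\beta n_t$. Expectations are over all randomness of the algorithm. *)

theory Defs
  imports "HOL-Probability.Probability"
begin

definition grad :: "('a::euclidean_space \<Rightarrow> real) \<Rightarrow> 'a \<Rightarrow> 'a" where
  "grad f x = (\<Sum>b\<in>Basis. frechet_derivative f (at x) b *\<^sub>R b)"

definition unif_sphere :: "'a::euclidean_space measure" where
  "unif_sphere = distr (uniform_measure lborel (ball 0 1)) borel (\<lambda>x. x /\<^sub>R norm x)"

definition obj :: "('a \<Rightarrow> 'b \<Rightarrow> 's \<Rightarrow> real) \<Rightarrow> 's measure \<Rightarrow> 'a \<Rightarrow> 'b \<Rightarrow> real" where
  "obj G P x y = (\<integral>\<xi>. G x y \<xi> \<partial>P)"

definition zo_x :: "('a::euclidean_space \<Rightarrow> 'b \<Rightarrow> 's \<Rightarrow> real) \<Rightarrow> real \<Rightarrow> 'a \<Rightarrow> 'b \<Rightarrow> 's \<times> 'a \<Rightarrow> 'a" where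
  "zo_x G \<mu> x y s = ((G (x + \<mu> *\<^sub>R snd s) y (fst s) - G x y (fst s)) / (\<mu> / real DIM('a))) *\<^sub>R snd s"

definition zo_y :: "('a \<Rightarrow> 'b::euclidean_space \<Rightarrow> 's \<Rightarrow> real) \<Rightarrow> real \<Rightarrow> 'a \<Rightarrow> 'b \<Rightarrow> 's \<times> 'b \<Rightarrow> 'b" where
  "zo_y G \<mu> x y s = ((G x (y + \<mu> *\<^sub>R snd s) (fst s) - G x y (fst s)) / (\<mu> / real DIM('b))) *\<^sub>R snd s"

definition zo_x_batch :: "('a::euclidean_space \<Rightarrow> 'b \<Rightarrow> 's \<Rightarrow> real) \<Rightarrow> real \<Rightarrow> nat \<Rightarrow> 'a \<Rightarrow> 'b \<Rightarrow> (nat \<Rightarrow> 's \<times> 'a) \<Rightarrow> 'a" where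
  "zo_x_batch G \<mu> r x y S = (1 / real r) *\<^sub>R (\<Sum>i<r. zo_x G \<mu> x y (S i))"

definition zo_y_batch :: "('a \<Rightarrow> 'b::euclidean_space \<Rightarrow> 's \<Rightarrow> real) \<Rightarrow> real \<Rightarrow> nat \<Rightarrow> 'a \<Rightarrow> 'b \<Rightarrow> (nat \<Rightarrow> 's \<times> 'b) \<Rightarrow> 'b" where
  "zo_y_batch G \<mu> r x y S = (1 / real r) *\<^sub>R (\<Sum>i<r. zo_y G \<mu> x y (S i))"

text \<open>W t i = ((xi, u), (zeta, v)) is the
  i-th fresh draw at iteration t for the x-update (xi, u) and for the y-update (zeta, v); only
  i < B (resp. i < b) are used.  The state at time t is (x_t, y_t, x_{t-1}, y_{t-1}, m_{t-1}, n_{t-1})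
  (the "previous" components at t = 0 are dummies and never used).\<close>
primrec vr_state :: "('a::euclidean_space \<Rightarrow> 'b::euclidean_space \<Rightarrow> 's \<Rightarrow> real) \<Rightarrow> nat \<Rightarrow> nat \<Rightarrow> nat \<Rightarrow>
    real \<Rightarrow> real \<Rightarrow> real \<Rightarrow> real \<Rightarrow> 'a \<Rightarrow> 'b \<Rightarrow> (nat \<Rightarrow> nat \<Rightarrow> ('s \<times> 'a) \<times> ('s \<times> 'b)) \<Rightarrow> nat \<Rightarrow>
    'a \<times> 'b \<times> 'a \<times> 'b \<times> 'a \<times> 'b" where
  "vr_state G q B b \<alpha> \<beta> \<mu>1 \<mu>2 x0 y0 W 0 = (x0, y0, x0, y0, 0, 0)"
| "vr_state G q B b \<alpha> \<beta> \<mu>1 \<mu>2 x0 y0 W (Suc t) =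
    (case vr_state G q B b \<alpha> \<beta> \<mu>1 \<mu>2 x0 y0 W t of (x, y, xp, yp, mp, np) \<Rightarrow>
      (let Sx = (\<lambda>i. fst (W t i)); Sy = (\<lambda>i. snd (W t i));
           m = (if t mod q = 0 then zo_x_batch G \<mu>1 B x y Sx
                else zo_x_batch G \<mu>1 b x y Sx - zo_x_batch G \<mu>1 b xp yp Sx + mp);
           x' = x - \<alpha> *\<^sub>R m;
           n = (if t mod q = 0 then zo_y_batch G \<mu>2 B x' y Sy
                else zo_y_batch G \<mu>2 b x' y Sy - zo_y_batch G \<mu>2 b x yp Sy + np);
           y' = y + \<beta> *\<^sub>R n
       in (x', y', x, y, m, n)))"

definition vr_x where "vr_x G q B b \<alpha> \<beta> \<mu>1 \<mu>2 x0 y0 W t = fst (vr_state G q B b \<alpha> \<beta> \<mu>1 \<mu>2 x0 y0 W t)"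
definition vr_y where "vr_y G q B b \<alpha> \<beta> \<mu>1 \<mu>2 x0 y0 W t = fst (snd (vr_state G q B b \<alpha> \<beta> \<mu>1 \<mu>2 x0 y0 W t))"
definition vr_m where "vr_m G q B b \<alpha> \<beta> \<mu>1 \<mu>2 x0 y0 W t =
  fst (snd (snd (snd (snd (vr_state G q B b \<alpha> \<beta> \<mu>1 \<mu>2 x0 y0 W (Suc t))))))"
definition vr_n where "vr_n G q B b \<alpha> \<beta> \<mu>1 \<mu>2 x0 y0 W t =
  snd (snd (snd (snd (snd (vr_state G q B b \<alpha> \<beta> \<mu>1 \<mu>2 x0 y0 W (Suc t))))))"

end

theory Submission
  imports Defs
begin


lemma grad_inner:
  fixes f :: "'a::euclidean_space \<Rightarrow> real"
  assumes "(f has_derivative f') (at x)"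
  shows "grad f x \<bullet> h = f' h"
proof -
  have fd: "frechet_derivative f (at x) = f'" using frechet_derivative_at[OF assms] by simp
  have lin: "linear f'" using assms has_derivative_linear by blast
  have "grad f x \<bullet> h = (\<Sum>b\<in>Basis. f' b * (b \<bullet> h))"
    unfolding grad_def fd by (simp add: inner_sum_left)
  also have "\<dots> = f' (\<Sum>b\<in>Basis. (h \<bullet> b) *\<^sub>R b)"
    using lin by (simp add: real_vector.linear_sum linear_scale inner_commute mult.commute)
  also have "\<dots> = f' h" by (simp add: euclidean_representation)
  finally show ?thesis .
qed

lemma descent:
  fixes f :: "'a::euclidean_space \<Rightarrow> real"
  assumes dif: "\<forall>z. f differentiable (at z)"
    and lip: "\<forall>x1 x2. norm (grad f x1 - grad f x2) \<le> L * norm (x1 - x2)"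
  shows "\<bar>f (x + h) - f x - grad f x \<bullet> h\<bar> \<le> L / 2 * (norm h)\<^sup>2"
proof -
  have D: "((\<lambda>s. f (x + s *\<^sub>R h)) has_real_derivative (grad f (x + s *\<^sub>R h) \<bullet> h)) (at s)" for s
  proof -
    have fd: "(f has_derivative frechet_derivative f (at (x + s *\<^sub>R h))) (at (x + s *\<^sub>R h))"
      using dif frechet_derivative_works by blast
    have l: "((\<lambda>s. x + s *\<^sub>R h) has_derivative (\<lambda>s. s *\<^sub>R h)) (at s)"
      by (auto intro!: derivative_eq_intros)
    have c: "((\<lambda>s. f (x + s *\<^sub>R h)) has_derivative (\<lambda>u. frechet_derivative f (at (x + s *\<^sub>R h)) (u *\<^sub>R h))) (at s)"
      using has_derivative_compose[OF l fd] by (simp add: o_def)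
    have lin: "linear (frechet_derivative f (at (x + s *\<^sub>R h)))"
      using fd has_derivative_linear by blast
    have eq: "(\<lambda>u. frechet_derivative f (at (x + s *\<^sub>R h)) (u *\<^sub>R h)) = (*) (grad f (x + s *\<^sub>R h) \<bullet> h)"
      using lin grad_inner[OF fd] by (auto simp: linear_scale)
    from c[unfolded eq] show ?thesis unfolding has_field_derivative_def .
  qed
  have bnd: "\<bar>(grad f (x + s *\<^sub>R h) - grad f x) \<bullet> h\<bar> \<le> L * s * (norm h)\<^sup>2" if "0 \<le> s" for s
  proof -
    have "\<bar>(grad f (x + s *\<^sub>R h) - grad f x) \<bullet> h\<bar> \<le> norm (grad f (x + s *\<^sub>R h) - grad f x) * norm h"
      by (rule Cauchy_Schwarz_ineq2)
    also have "\<dots> \<le> L * norm (s *\<^sub>R h) * norm h"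
      using lip[rule_format, of "x + s *\<^sub>R h" x] by (simp add: mult_right_mono)
    also have "\<dots> = L * s * (norm h)\<^sup>2" using that by (simp add: power2_eq_square)
    finally show ?thesis .
  qed
  define c where "c = grad f x \<bullet> h"
  have up: "(\<lambda>s. f (x + s *\<^sub>R h) - s * c + L / 2 * s\<^sup>2 * (norm h)\<^sup>2) 0
      \<le> (\<lambda>s. f (x + s *\<^sub>R h) - s * c + L / 2 * s\<^sup>2 * (norm h)\<^sup>2) 1"
  proof (rule DERIV_nonneg_imp_nondecreasing[of 0 1])
    fix s :: real assume s: "0 \<le> s" "s \<le> 1"
    show "\<exists>y. ((\<lambda>s. f (x + s *\<^sub>R h) - s * c + L / 2 * s\<^sup>2 * (norm h)\<^sup>2) has_real_derivative y) (at s) \<and> 0 \<le> y"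
      apply (rule exI, rule conjI)
       apply (rule derivative_eq_intros D | simp)+
      using bnd[OF s(1)] unfolding c_def by (simp add: inner_diff_left abs_le_iff algebra_simps)
  qed simp
  have dn: "(\<lambda>s. - f (x + s *\<^sub>R h) + s * c + L / 2 * s\<^sup>2 * (norm h)\<^sup>2) 0
      \<le> (\<lambda>s. - f (x + s *\<^sub>R h) + s * c + L / 2 * s\<^sup>2 * (norm h)\<^sup>2) 1"
  proof (rule DERIV_nonneg_imp_nondecreasing[of 0 1])
    fix s :: real assume s: "0 \<le> s" "s \<le> 1"
    show "\<exists>y. ((\<lambda>s. - f (x + s *\<^sub>R h) + s * c + L / 2 * s\<^sup>2 * (norm h)\<^sup>2) has_real_derivative y) (at s) \<and> 0 \<le> y"
      apply (rule exI, rule conjI)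
       apply (rule derivative_eq_intros D | simp)+
      using bnd[OF s(1)] unfolding c_def by (simp add: inner_diff_left abs_le_iff algebra_simps)
  qed simp
  show ?thesis using up dn unfolding c_def abs_le_iff by simp
qed

lemma expect_descent:
  fixes F :: "'a::euclidean_space \<Rightarrow> 's \<Rightarrow> real"
  assumes P: "prob_space P" and int: "\<forall>z. integrable P (F z)"
   and dif: "\<forall>\<xi>\<in>space P. \<forall>z. (\<lambda>z. F z \<xi>) differentiable (at z)"
   and lip: "\<forall>\<xi>\<in>space P. \<forall>x1 x2. norm (grad (\<lambda>z. F z \<xi>) x1 - grad (\<lambda>z. F z \<xi>) x2) \<le> L * norm (x1 - x2)"
   and L: "L > 0"
  shows "\<bar>(\<integral>\<xi>. F (x + h) \<xi> \<partial>P) - (\<integral>\<xi>. F x \<xi> \<partial>P) - grad (\<lambda>z. \<integral>\<xi>. F z \<xi> \<partial>P) x \<bullet> h\<bar> \<le> L / 2 * (norm h)\<^sup>2"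
proof -
  interpret prob_space P by (rule P)
  define gr where "gr \<xi> = grad (\<lambda>z. F z \<xi>) x" for \<xi>
  define g where "g z = (\<integral>\<xi>. F z \<xi> \<partial>P)" for z
  have A: "\<bar>F (x + h) \<xi> - F x \<xi> - gr \<xi> \<bullet> h\<bar> \<le> L / 2 * (norm h)\<^sup>2" if "\<xi> \<in> space P" for \<xi> h
    unfolding gr_def using descent[of "\<lambda>z. F z \<xi>" L x h] dif lip that by blast
  have meas: "(\<lambda>\<xi>. gr \<xi> \<bullet> b) \<in> borel_measurable P" for b
  proof (rule borel_measurable_LIMSEQ_real)
    fix \<xi> assume \<xi>: "\<xi> \<in> space P"
    let ?u = "\<lambda>k. (F (x + (1 / real (Suc k)) *\<^sub>R b) \<xi> - F x \<xi>) * real (Suc k)"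
    have "(\<lambda>k. ?u k - gr \<xi> \<bullet> b) \<longlonglongrightarrow> 0"
    proof (rule Lim_null_comparison)
      show "\<forall>\<^sub>F k in sequentially. norm (?u k - gr \<xi> \<bullet> b) \<le> L / 2 * (norm b)\<^sup>2 * inverse (real (Suc k))"
      proof (intro always_eventually allI)
        fix k
        have e: "?u k - gr \<xi> \<bullet> b = (F (x + (1 / real (Suc k)) *\<^sub>R b) \<xi> - F x \<xi> - gr \<xi> \<bullet> ((1 / real (Suc k)) *\<^sub>R b)) * real (Suc k)"
          by (simp add: field_simps)
        have "norm (?u k - gr \<xi> \<bullet> b) \<le> L / 2 * (norm ((1 / real (Suc k)) *\<^sub>R b))\<^sup>2 * real (Suc k)"
          unfolding e real_norm_def abs_mult using A[OF \<xi>, of "(1 / real (Suc k)) *\<^sub>R b"]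
          by (subst abs_of_nonneg[of "real (Suc k)"]) (auto intro: mult_right_mono)
        also have "\<dots> = L / 2 * (norm b)\<^sup>2 * inverse (real (Suc k))"
        proof -
          have "\<forall>r::real. r > 0 \<longrightarrow> L / 2 * (norm ((1 / r) *\<^sub>R b))\<^sup>2 * r = L / 2 * (norm b)\<^sup>2 * inverse r"
            by (simp add: power2_eq_square field_simps)
          then show ?thesis by (metis of_nat_0_less_iff zero_less_Suc)
        qed
        finally show "norm (?u k - gr \<xi> \<bullet> b) \<le> L / 2 * (norm b)\<^sup>2 * inverse (real (Suc k))" .
      qed
      show "(\<lambda>k. L / 2 * (norm b)\<^sup>2 * inverse (real (Suc k))) \<longlonglongrightarrow> 0"
        by (intro tendsto_mult_right_zero LIMSEQ_inverse_real_of_nat)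
    qed
    then show "?u \<longlonglongrightarrow> gr \<xi> \<bullet> b" by (rule LIM_zero_cancel)
  next
    fix k
    show "(\<lambda>\<xi>. (F (x + (1 / real (Suc k)) *\<^sub>R b) \<xi> - F x \<xi>) * real (Suc k)) \<in> borel_measurable P"
      using int by (intro borel_measurable_times borel_measurable_diff borel_measurable_const) auto
  qed
  have intb: "integrable P (\<lambda>\<xi>. gr \<xi> \<bullet> b)" for b
  proof (rule Bochner_Integration.integrable_bound)
    show "integrable P (\<lambda>\<xi>. \<bar>F (x + b) \<xi> - F x \<xi>\<bar> + L / 2 * (norm b)\<^sup>2)"
      using int by (intro Bochner_Integration.integrable_add integrable_abs Bochner_Integration.integrable_diff) auto
    show "(\<lambda>\<xi>. gr \<xi> \<bullet> b) \<in> borel_measurable P" by (rule meas)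
    show "AE \<xi> in P. norm (gr \<xi> \<bullet> b) \<le> norm (\<bar>F (x + b) \<xi> - F x \<xi>\<bar> + L / 2 * (norm b)\<^sup>2)"
    proof (rule AE_I2)
      fix \<xi> assume "\<xi> \<in> space P"
      from A[OF this, of b] have h: "\<bar>F (x + b) \<xi> - F x \<xi> - gr \<xi> \<bullet> b\<bar> \<le> L / 2 * (norm b)\<^sup>2" .
      moreover have "0 \<le> L / 2 * (norm b)\<^sup>2" using L by simp
      ultimately show "norm (gr \<xi> \<bullet> b) \<le> norm (\<bar>F (x + b) \<xi> - F x \<xi>\<bar> + L / 2 * (norm b)\<^sup>2)"
        unfolding real_norm_def by arith
    qed
  qed
  define v where "v = (\<Sum>b\<in>Basis. (\<integral>\<xi>. gr \<xi> \<bullet> b \<partial>P) *\<^sub>R b)"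
  have vh: "(\<integral>\<xi>. gr \<xi> \<bullet> h \<partial>P) = v \<bullet> h" for h
  proof -
    have "(\<lambda>\<xi>. gr \<xi> \<bullet> h) = (\<lambda>\<xi>. \<Sum>b\<in>Basis. (h \<bullet> b) * (gr \<xi> \<bullet> b))"
    proof
      fix \<xi>
      have "gr \<xi> \<bullet> h = gr \<xi> \<bullet> (\<Sum>b\<in>Basis. (h \<bullet> b) *\<^sub>R b)" by (simp add: euclidean_representation)
      also have "\<dots> = (\<Sum>b\<in>Basis. (h \<bullet> b) * (gr \<xi> \<bullet> b))" by (simp add: inner_sum_right)
      finally show "gr \<xi> \<bullet> h = (\<Sum>b\<in>Basis. (h \<bullet> b) * (gr \<xi> \<bullet> b))" .
    qed
    then have "(\<integral>\<xi>. gr \<xi> \<bullet> h \<partial>P) = (\<Sum>b\<in>Basis. (h \<bullet> b) * (\<integral>\<xi>. gr \<xi> \<bullet> b \<partial>P))"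
      using intb by (simp add: Bochner_Integration.integral_sum)
    also have "\<dots> = v \<bullet> h" unfolding v_def inner_sum_left inner_scaleR_left by (rule sum.cong) (simp_all add: inner_commute mult.commute)
    finally show ?thesis .
  qed
  have K: "\<bar>g (x + h) - g x - v \<bullet> h\<bar> \<le> L / 2 * (norm h)\<^sup>2" for h
  proof -
    have "g (x + h) - g x - v \<bullet> h = (\<integral>\<xi>. F (x + h) \<xi> - F x \<xi> - gr \<xi> \<bullet> h \<partial>P)"
      unfolding g_def vh[symmetric] using int intb
      by (simp add: Bochner_Integration.integral_diff)
    also have "\<bar>\<dots>\<bar> \<le> (\<integral>\<xi>. \<bar>F (x + h) \<xi> - F x \<xi> - gr \<xi> \<bullet> h\<bar> \<partial>P)"
      by (rule integral_abs_bound)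
    also have "\<dots> \<le> (\<integral>\<xi>. L / 2 * (norm h)\<^sup>2 \<partial>P)"
      using A int intb by (intro integral_mono) auto
    also have "\<dots> = L / 2 * (norm h)\<^sup>2" by (simp add: prob_space)
    finally show ?thesis .
  qed
  have hd: "(g has_derivative (\<lambda>h. v \<bullet> h)) (at x)"
    unfolding has_derivative_at_alt
  proof (intro conjI allI impI)
    show "bounded_linear ((\<bullet>) v)" by (rule bounded_linear_inner_right)
    fix e :: real assume e: "e > 0"
    show "\<exists>d>0. \<forall>y. norm (y - x) < d \<longrightarrow> norm (g y - g x - v \<bullet> (y - x)) \<le> e * norm (y - x)"
    proof (intro exI[of _ "2 * e / L"] conjI allI impI)
      show "0 < 2 * e / L" using e L by simp
      fix y assume y: "norm (y - x) < 2 * e / L"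
      have "norm (g y - g x - v \<bullet> (y - x)) \<le> L / 2 * (norm (y - x))\<^sup>2"
        using K[of "y - x"] by simp
      also have "\<dots> = (L / 2 * norm (y - x)) * norm (y - x)" by (simp add: power2_eq_square)
      also have "\<dots> \<le> e * norm (y - x)"
        using y L by (intro mult_right_mono) (auto simp: field_simps)
      finally show "norm (g y - g x - v \<bullet> (y - x)) \<le> e * norm (y - x)" .
    qed
  qed
  have "grad g x = v"
    by (rule euclidean_eqI) (metis grad_inner[OF hd] inner_commute)
  then show ?thesis using K[of h] unfolding g_def[abs_def] by simp
qed

lemma vr_x_Suc: "vr_x G q B b \<alpha> \<beta> \<mu>1 \<mu>2 x0 y0 W (Suc t) = vr_x G q B b \<alpha> \<beta> \<mu>1 \<mu>2 x0 y0 W t - \<alpha> *\<^sub>R vr_m G q B b \<alpha> \<beta> \<mu>1 \<mu>2 x0 y0 W t"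
  by (simp add: vr_x_def vr_m_def Let_def split: prod.split)

lemma vr_y_Suc: "vr_y G q B b \<alpha> \<beta> \<mu>1 \<mu>2 x0 y0 W (Suc t) = vr_y G q B b \<alpha> \<beta> \<mu>1 \<mu>2 x0 y0 W t + \<beta> *\<^sub>R vr_n G q B b \<alpha> \<beta> \<mu>1 \<mu>2 x0 y0 W t"
  by (simp add: vr_y_def vr_n_def Let_def split: prod.split)

lemma alg:
  fixes gxy gx'y gx'y' a c \<alpha> \<beta> L N2 M2 Gx Gy :: real
  assumes "gx'y \<ge> gxy - \<alpha> * a - L / 2 * \<alpha>\<^sup>2 * M2" "gx'y' \<ge> gx'y + \<beta> * c - L / 2 * \<beta>\<^sup>2 * N2"
  shows "gx'y' \<ge> gxy + \<beta> / 2 * Gy - \<alpha> / 2 * Gx - \<beta> / 2 * (Gy - 2 * c + N2) + \<alpha> / 2 * (Gx - 2 * a + M2)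
     + \<beta> / 2 * (1 - L * \<beta>) * N2 - \<alpha> / 2 * (1 + \<alpha> * L) * M2"
proof -
  have "gxy + \<beta> / 2 * Gy - \<alpha> / 2 * Gx - \<beta> / 2 * (Gy - 2 * c + N2) + \<alpha> / 2 * (Gx - 2 * a + M2)
     + \<beta> / 2 * (1 - L * \<beta>) * N2 - \<alpha> / 2 * (1 + \<alpha> * L) * M2
     = (gxy - \<alpha> * a - L / 2 * \<alpha>\<^sup>2 * M2) + (\<beta> * c - L / 2 * \<beta>\<^sup>2 * N2)"
    by (simp add: field_simps power2_eq_square)
  then show ?thesis using assms by linarith
qed

lemma norm_diff_sq: fixes u v :: "'a::real_inner" shows "(norm (u - v))\<^sup>2 = (norm u)\<^sup>2 - 2 * (u \<bullet> v) + (norm v)\<^sup>2"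
  by (simp add: power2_norm_eq_inner inner_diff_left inner_diff_right inner_commute)



theorem lemma6:
  fixes G :: "'a::euclidean_space \<Rightarrow> 'b::euclidean_space \<Rightarrow> 's \<Rightarrow> real"
    and P :: "'s measure" and M :: "'w measure"
    and W :: "nat \<Rightarrow> nat \<Rightarrow> 'w \<Rightarrow> ('s \<times> 'a) \<times> ('s \<times> 'b)"
    and q B b :: nat and \<alpha> \<beta> \<mu>1 \<mu>2 lbar :: real and x0 :: 'a and y0 :: 'b and t :: nat
    and X :: "nat \<Rightarrow> 'w \<Rightarrow> 'a" and Y :: "nat \<Rightarrow> 'w \<Rightarrow> 'b"
    and m :: "nat \<Rightarrow> 'w \<Rightarrow> 'a" and n :: "nat \<Rightarrow> 'w \<Rightarrow> 'b"
    and g :: "'a \<Rightarrow> 'b \<Rightarrow> real" and gx :: "'a \<Rightarrow> 'b \<Rightarrow> 'a" and gy :: "'a \<Rightarrow> 'b \<Rightarrow> 'b"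
    and D :: "(('s \<times> 'a) \<times> ('s \<times> 'b)) measure"
  defines "X \<equiv> \<lambda>k \<omega>. vr_x G q B b \<alpha> \<beta> \<mu>1 \<mu>2 x0 y0 (\<lambda>k' i. W k' i \<omega>) k"
    and "Y \<equiv> \<lambda>k \<omega>. vr_y G q B b \<alpha> \<beta> \<mu>1 \<mu>2 x0 y0 (\<lambda>k' i. W k' i \<omega>) k"
    and "m \<equiv> \<lambda>k \<omega>. vr_m G q B b \<alpha> \<beta> \<mu>1 \<mu>2 x0 y0 (\<lambda>k' i. W k' i \<omega>) k"
    and "n \<equiv> \<lambda>k \<omega>. vr_n G q B b \<alpha> \<beta> \<mu>1 \<mu>2 x0 y0 (\<lambda>k' i. W k' i \<omega>) k"
    and "g \<equiv> obj G P"
    and "gx \<equiv> \<lambda>x y. grad (\<lambda>x'. g x' y) x"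
    and "gy \<equiv> \<lambda>x y. grad (\<lambda>y'. g x y') y"
    and "D \<equiv> (P \<Otimes>\<^sub>M unif_sphere) \<Otimes>\<^sub>M (P \<Otimes>\<^sub>M unif_sphere)"
  assumes P: "prob_space P" and M: "prob_space M"
    and Gint: "\<forall>x y. integrable P (G x y)"
    and Gdiff: "\<forall>\<xi>\<in>space P. \<forall>x y. (\<lambda>x'. G x' y \<xi>) differentiable (at x) \<and> (\<lambda>y'. G x y' \<xi>) differentiable (at y)"
    and lbar: "lbar > 0"
    and lipx: "\<forall>\<xi>\<in>space P. \<forall>x1 x2 y1 y2.
        norm (grad (\<lambda>x. G x y1 \<xi>) x1 - grad (\<lambda>x. G x y2 \<xi>) x2) \<le> lbar * (norm (x1 - x2) + norm (y1 - y2))"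
    and lipy: "\<forall>\<xi>\<in>space P. \<forall>x1 x2 y1 y2.
        norm (grad (\<lambda>y. G x1 y \<xi>) y1 - grad (\<lambda>y. G x2 y \<xi>) y2) \<le> lbar * (norm (x1 - x2) + norm (y1 - y2))"
    and params: "\<alpha> > 0" "\<beta> > 0" "\<mu>1 > 0" "\<mu>2 > 0"
    and indep: "prob_space.indep_vars M (\<lambda>_. D) (\<lambda>(k, i). W k i) UNIV"
    and distW: "\<forall>k i. distr M D (W k i) = D"
    and integrable_terms:
      "integrable M (\<lambda>\<omega>. g (X (Suc t) \<omega>) (Y (Suc t) \<omega>))"
      "integrable M (\<lambda>\<omega>. g (X t \<omega>) (Y t \<omega>))"
      "integrable M (\<lambda>\<omega>. (norm (gy (X (Suc t) \<omega>) (Y t \<omega>)))\<^sup>2)"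
      "integrable M (\<lambda>\<omega>. (norm (gx (X t \<omega>) (Y t \<omega>)))\<^sup>2)"
      "integrable M (\<lambda>\<omega>. (norm (gy (X (Suc t) \<omega>) (Y t \<omega>) - n t \<omega>))\<^sup>2)"
      "integrable M (\<lambda>\<omega>. (norm (gx (X t \<omega>) (Y t \<omega>) - m t \<omega>))\<^sup>2)"
      "integrable M (\<lambda>\<omega>. (norm (n t \<omega>))\<^sup>2)"
      "integrable M (\<lambda>\<omega>. (norm (m t \<omega>))\<^sup>2)"
  shows "(\<integral>\<omega>. g (X (Suc t) \<omega>) (Y (Suc t) \<omega>) \<partial>M) \<ge>
      (\<integral>\<omega>. g (X t \<omega>) (Y t \<omega>) \<partial>M)
      + \<beta> / 2 * (\<integral>\<omega>. (norm (gy (X (Suc t) \<omega>) (Y t \<omega>)))\<^sup>2 \<partial>M)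
      - \<alpha> / 2 * (\<integral>\<omega>. (norm (gx (X t \<omega>) (Y t \<omega>)))\<^sup>2 \<partial>M)
      - \<beta> / 2 * (\<integral>\<omega>. (norm (gy (X (Suc t) \<omega>) (Y t \<omega>) - n t \<omega>))\<^sup>2 \<partial>M)
      + \<alpha> / 2 * (\<integral>\<omega>. (norm (gx (X t \<omega>) (Y t \<omega>) - m t \<omega>))\<^sup>2 \<partial>M)
      + \<beta> / 2 * (1 - lbar * \<beta>) * (\<integral>\<omega>. (norm (n t \<omega>))\<^sup>2 \<partial>M)
      - \<alpha> / 2 * (1 + \<alpha> * lbar) * (\<integral>\<omega>. (norm (m t \<omega>))\<^sup>2 \<partial>M)"
  proof -
  let ?R = "\<lambda>\<omega>. g (X t \<omega>) (Y t \<omega>)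
      + \<beta> / 2 * (norm (gy (X (Suc t) \<omega>) (Y t \<omega>)))\<^sup>2
      - \<alpha> / 2 * (norm (gx (X t \<omega>) (Y t \<omega>)))\<^sup>2
      - \<beta> / 2 * (norm (gy (X (Suc t) \<omega>) (Y t \<omega>) - n t \<omega>))\<^sup>2
      + \<alpha> / 2 * (norm (gx (X t \<omega>) (Y t \<omega>) - m t \<omega>))\<^sup>2
      + \<beta> / 2 * (1 - lbar * \<beta>) * (norm (n t \<omega>))\<^sup>2
      - \<alpha> / 2 * (1 + \<alpha> * lbar) * (norm (m t \<omega>))\<^sup>2"
  have XS: "X (Suc t) \<omega> = X t \<omega> - \<alpha> *\<^sub>R m t \<omega>" for \<omega>
    unfolding X_def m_def by (rule vr_x_Suc)
  have YS: "Y (Suc t) \<omega> = Y t \<omega> + \<beta> *\<^sub>R n t \<omega>" for \<omega>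
    unfolding Y_def n_def by (rule vr_y_Suc)
  have dx: "\<bar>g (x + h) y - g x y - gx x y \<bullet> h\<bar> \<le> lbar / 2 * (norm h)\<^sup>2" for x h y
  proof -
    have "\<bar>(\<integral>\<xi>. G (x + h) y \<xi> \<partial>P) - (\<integral>\<xi>. G x y \<xi> \<partial>P) - grad (\<lambda>z. \<integral>\<xi>. G z y \<xi> \<partial>P) x \<bullet> h\<bar> \<le> lbar / 2 * (norm h)\<^sup>2"
    proof (rule expect_descent[OF P _ _ _ lbar, of "\<lambda>z \<xi>. G z y \<xi>"])
      show "\<forall>z. integrable P (\<lambda>\<xi>. G z y \<xi>)" using Gint by simp
      show "\<forall>\<xi>\<in>space P. \<forall>z. (\<lambda>z. G z y \<xi>) differentiable at z" using Gdiff by blast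
      show "\<forall>\<xi>\<in>space P. \<forall>x1 x2. norm (grad (\<lambda>z. G z y \<xi>) x1 - grad (\<lambda>z. G z y \<xi>) x2) \<le> lbar * norm (x1 - x2)"
      proof (intro ballI allI)
        fix \<xi> x1 x2 assume "\<xi> \<in> space P"
        with lipx show "norm (grad (\<lambda>z. G z y \<xi>) x1 - grad (\<lambda>z. G z y \<xi>) x2) \<le> lbar * norm (x1 - x2)"
          by (metis add.right_neutral diff_self norm_zero)
      qed
    qed
    then show ?thesis unfolding g_def gx_def obj_def by simp
  qed
  have dy: "\<bar>g x (y + h) - g x y - gy x y \<bullet> h\<bar> \<le> lbar / 2 * (norm h)\<^sup>2" for x h y
  proof -
    have "\<bar>(\<integral>\<xi>. G x (y + h) \<xi> \<partial>P) - (\<integral>\<xi>. G x y \<xi> \<partial>P) - grad (\<lambda>z. \<integral>\<xi>. G x z \<xi> \<partial>P) y \<bullet> h\<bar> \<le> lbar / 2 * (norm h)\<^sup>2"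
    proof (rule expect_descent[OF P _ _ _ lbar, of "\<lambda>z \<xi>. G x z \<xi>"])
      show "\<forall>z. integrable P (\<lambda>\<xi>. G x z \<xi>)" using Gint by simp
      show "\<forall>\<xi>\<in>space P. \<forall>z. (\<lambda>z. G x z \<xi>) differentiable at z" using Gdiff by blast
      show "\<forall>\<xi>\<in>space P. \<forall>x1 x2. norm (grad (\<lambda>z. G x z \<xi>) x1 - grad (\<lambda>z. G x z \<xi>) x2) \<le> lbar * norm (x1 - x2)"
      proof (intro ballI allI)
        fix \<xi> x1 x2 assume "\<xi> \<in> space P"
        with lipy show "norm (grad (\<lambda>z. G x z \<xi>) x1 - grad (\<lambda>z. G x z \<xi>) x2) \<le> lbar * norm (x1 - x2)"
          by (metis add_0 diff_self norm_zero)
      qed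
    qed
    then show ?thesis unfolding g_def gy_def obj_def by simp
  qed
  have pw: "?R \<omega> \<le> g (X (Suc t) \<omega>) (Y (Suc t) \<omega>)" for \<omega>
  proof -
    let ?x = "X t \<omega>" and ?y = "Y t \<omega>" and ?m = "m t \<omega>" and ?n = "n t \<omega>"
    let ?x' = "X (Suc t) \<omega>"
    have d1: "\<bar>g (?x + (- \<alpha>) *\<^sub>R ?m) ?y - g ?x ?y - gx ?x ?y \<bullet> ((- \<alpha>) *\<^sub>R ?m)\<bar> \<le> lbar / 2 * (norm ((- \<alpha>) *\<^sub>R ?m))\<^sup>2"
      by (rule dx)
    have e1: "gx ?x ?y \<bullet> ((- \<alpha>) *\<^sub>R ?m) = - (\<alpha> * (gx ?x ?y \<bullet> ?m))" by simp
    have e2: "(norm ((- \<alpha>) *\<^sub>R ?m))\<^sup>2 = \<alpha>\<^sup>2 * (norm ?m)\<^sup>2" by (simp add: power_mult_distrib)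
    have e3: "?x + (- \<alpha>) *\<^sub>R ?m = ?x'" by (simp add: XS)
    have h1: "g ?x' ?y \<ge> g ?x ?y - \<alpha> * (gx ?x ?y \<bullet> ?m) - lbar / 2 * \<alpha>\<^sup>2 * (norm ?m)\<^sup>2"
      using d1 unfolding e1 e2 e3 abs_le_iff by (simp add: algebra_simps)
    have d2: "\<bar>g ?x' (?y + \<beta> *\<^sub>R ?n) - g ?x' ?y - gy ?x' ?y \<bullet> (\<beta> *\<^sub>R ?n)\<bar> \<le> lbar / 2 * (norm (\<beta> *\<^sub>R ?n))\<^sup>2"
      by (rule dy)
    have f1: "gy ?x' ?y \<bullet> (\<beta> *\<^sub>R ?n) = \<beta> * (gy ?x' ?y \<bullet> ?n)" by simp
    have f2: "(norm (\<beta> *\<^sub>R ?n))\<^sup>2 = \<beta>\<^sup>2 * (norm ?n)\<^sup>2" by (simp add: power_mult_distrib)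
    have f3: "?y + \<beta> *\<^sub>R ?n = Y (Suc t) \<omega>" by (simp add: YS)
    have h2: "g ?x' (Y (Suc t) \<omega>) \<ge> g ?x' ?y + \<beta> * (gy ?x' ?y \<bullet> ?n) - lbar / 2 * \<beta>\<^sup>2 * (norm ?n)\<^sup>2"
      using d2 unfolding f1 f2 f3 abs_le_iff by (simp add: algebra_simps)
    show ?thesis
      unfolding norm_diff_sq[of "gy ?x' ?y" ?n] norm_diff_sq[of "gx ?x ?y" ?m]
      by (rule alg[OF h1 h2])
  qed
  note I = integrable_terms
  have intR: "integrable M ?R"
    using I by (intro Bochner_Integration.integrable_add Bochner_Integration.integrable_diff integrable_mult_right) auto
  have eqR: "(\<integral>\<omega>. ?R \<omega> \<partial>M) = (\<integral>\<omega>. g (X t \<omega>) (Y t \<omega>) \<partial>M)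
      + \<beta> / 2 * (\<integral>\<omega>. (norm (gy (X (Suc t) \<omega>) (Y t \<omega>)))\<^sup>2 \<partial>M)
      - \<alpha> / 2 * (\<integral>\<omega>. (norm (gx (X t \<omega>) (Y t \<omega>)))\<^sup>2 \<partial>M)
      - \<beta> / 2 * (\<integral>\<omega>. (norm (gy (X (Suc t) \<omega>) (Y t \<omega>) - n t \<omega>))\<^sup>2 \<partial>M)
      + \<alpha> / 2 * (\<integral>\<omega>. (norm (gx (X t \<omega>) (Y t \<omega>) - m t \<omega>))\<^sup>2 \<partial>M)
      + \<beta> / 2 * (1 - lbar * \<beta>) * (\<integral>\<omega>. (norm (n t \<omega>))\<^sup>2 \<partial>M)
      - \<alpha> / 2 * (1 + \<alpha> * lbar) * (\<integral>\<omega>. (norm (m t \<omega>))\<^sup>2 \<partial>M)"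
    using I by (simp add: Bochner_Integration.integral_add Bochner_Integration.integral_diff
        Bochner_Integration.integrable_add Bochner_Integration.integrable_diff)
  have "(\<integral>\<omega>. ?R \<omega> \<partial>M) \<le> (\<integral>\<omega>. g (X (Suc t) \<omega>) (Y (Suc t) \<omega>) \<partial>M)"
    by (rule integral_mono[OF intR I(1) pw])
  then show ?thesis unfolding eqR .
qed

end
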